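(* Let $\mathcal{T} = \{T_1, \ldots, T_t\}$ be a set of unrooted binary phylogenetic trees on a common leaf set $X$ with $n = |X|$, and let $\mathcal{Q}$ be the set of quartets that are incompatible quartets of $T_1$ and $T_i$ for some $2 \le i \le t$. Then there is a feasible solution $\tilde x$ of the linear program $$\text{minimize } \sum_{e \in E(T_1)} x_e \quad \text{s.t. } \sum_{e \in L(Q)} x_e \ge 1 \ \ \forall Q \in \mathcal{Q}, \qquad x_e \ge 0\ \ \forall e \in E(T_1)$$ with $\sum_{e \in E(T_1)} \tilde x_e = n/4$.
   Context: A (binary) phylogenetic tree on a finite set $X$ is an unrooted tree whose internal vertices have degree 3 and whose leaves are bijectively labelled by $X$. Two phylogenetic trees on $X$ are isomorphic ($\cong$) if there is a graph isomorphism between them fixing every leaf label. For $Y \subseteq X$, $T[Y]$ is the minimal subtree of $T$ connecting the leaves in $Y$, and $T|_Y$ is obtained from $T[Y]$ by suppressing all degree-2 vertices. A quartet is a 4-element subset of $X$; for $Q=\{a,b,c,d\}$, $ab|cd$ is the tree on $Q$ where $a,b$ share a neighbour $u$, $c,d$ share a neighbour $v$, and $u,v$ are adjacent. If $T_1|_Q \cong ab|cd$, $L(Q)$ is the set of edges of $T_1[\{a,b\}] \cup T_1[\{c,d\}]$. $Q$ is an incompatible quartet of $T_1,T_i$ if $T_1|_Q \not\cong T_i|_Q$. *)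

theory Defs
  imports Complex_Main
begin

text \<open>An unrooted phylogenetic tree on X: a tree whose leaves (degree-1 vertices)
  are exactly the elements of X (so leaves are labelled by X via the identity)
  and whose other vertices have degree 3.\<close>

type_synonym 'v graph = "'v set \<times> 'v set set"

definition verts :: "'v graph \<Rightarrow> 'v set" where "verts T = fst T"
definition edges :: "'v graph \<Rightarrow> 'v set set" where "edges T = snd T"

definition is_graph :: "'v graph \<Rightarrow> bool" where
  "is_graph T \<longleftrightarrow> finite (verts T) \<and>
     (\<forall>e\<in>edges T. \<exists>u v. u \<noteq> v \<and> u \<in> verts T \<and> v \<in> verts T \<and> e = {u, v})"

definition degree :: "'v graph \<Rightarrow> 'v \<Rightarrow> nat" where
  "degree T v = card {e \<in> edges T. v \<in> e}"

definition connected_on :: "'v set \<Rightarrow> 'v set set \<Rightarrow> bool" where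
  "connected_on W F \<longleftrightarrow>
     (\<forall>u\<in>W. \<forall>v\<in>W. (u, v) \<in> ({(a, b). {a, b} \<in> F \<and> a \<in> W \<and> b \<in> W})\<^sup>*)"

definition is_tree :: "'v graph \<Rightarrow> bool" where
  "is_tree T \<longleftrightarrow> is_graph T \<and> verts T \<noteq> {} \<and> connected_on (verts T) (edges T)
     \<and> card (edges T) + 1 = card (verts T)"

definition phylo_tree :: "'v set \<Rightarrow> 'v graph \<Rightarrow> bool" where
  "phylo_tree X T \<longleftrightarrow> is_tree T \<and> X \<subseteq> verts T \<and>
     (\<forall>v\<in>verts T. (v \<in> X \<longrightarrow> degree T v = 1) \<and> (v \<notin> X \<longrightarrow> degree T v = 3))"

text \<open>Vertex set of the minimal subtree T[Y] connecting Y: the intersection of the vertex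
  sets of all connected subgraphs of T containing Y.\<close>
definition span_verts :: "'v graph \<Rightarrow> 'v set \<Rightarrow> 'v set" where
  "span_verts T Y = \<Inter> {W. W \<subseteq> verts T \<and> Y \<subseteq> W \<and>
       connected_on W {e \<in> edges T. e \<subseteq> W}}"

definition span_edges :: "'v graph \<Rightarrow> 'v set \<Rightarrow> 'v set set" where
  "span_edges T Y = {e \<in> edges T. e \<subseteq> span_verts T Y}"

text \<open>T|_{a,b,c,d} is isomorphic to ab|cd: the minimal subtrees T[{a,b}] and T[{c,d}]
  are vertex-disjoint.\<close>
definition displays :: "'v graph \<Rightarrow> 'v \<Rightarrow> 'v \<Rightarrow> 'v \<Rightarrow> 'v \<Rightarrow> bool" where
  "displays T a b c d \<longleftrightarrow> span_verts T {a, b} \<inter> span_verts T {c, d} = {}"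

definition quartets :: "'v set \<Rightarrow> 'v set set" where
  "quartets X = {Q. Q \<subseteq> X \<and> card Q = 4}"

definition incompatible :: "'v graph \<Rightarrow> 'v graph \<Rightarrow> 'v set \<Rightarrow> bool" where
  "incompatible T T' Q \<longleftrightarrow>
     \<not> (\<forall>a b c d. {a, b, c, d} = Q \<longrightarrow> (displays T a b c d \<longleftrightarrow> displays T' a b c d))"

definition Lq :: "'v graph \<Rightarrow> 'v \<Rightarrow> 'v \<Rightarrow> 'v \<Rightarrow> 'v \<Rightarrow> 'v set set" where
  "Lq T a b c d = span_edges T {a, b} \<union> span_edges T {c, d}"

end

theory Submission
  imports Defs
begin

lemma dc:
  assumes "finite E" "finite S"
  shows "(\<Sum>e\<in>E. card (e \<inter> S)) = (\<Sum>v\<in>S. card {e\<in>E. v \<in> e})"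
proof -
  have "(\<Sum>e\<in>E. card (e \<inter> S)) = (\<Sum>e\<in>E. \<Sum>v\<in>S. if v \<in> e then 1 else 0)"
  proof (rule sum.cong)
    fix e assume "e \<in> E"
    have "e \<inter> S = {v\<in>S. v \<in> e}" by blast
    then show "card (e \<inter> S) = (\<Sum>v\<in>S. if v \<in> e then 1 else 0)"
      using assms(2) by (simp add: sum.inter_filter[symmetric])
  qed simp
  also have "\<dots> = (\<Sum>v\<in>S. \<Sum>e\<in>E. if v \<in> e then 1 else 0)" by (rule sum.swap)
  also have "\<dots> = (\<Sum>v\<in>S. card {e\<in>E. v \<in> e})"
    using assms(1) by (simp add: sum.inter_filter[symmetric])
  finally show ?thesis .
qed

lemma finite_edges:
  assumes "phylo_tree X T" shows "finite (edges T)"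
proof -
  have "is_tree T" using assms unfolding phylo_tree_def by (rule conjunct1)
  then have g: "is_graph T" unfolding is_tree_def by (rule conjunct1)
  then have G: "finite (verts T)"
     "\<forall>e\<in>edges T. \<exists>u v. u \<noteq> v \<and> u \<in> verts T \<and> v \<in> verts T \<and> e = {u, v}"
    unfolding is_graph_def by auto
  have "edges T \<subseteq> Pow (verts T)"
  proof
    fix e assume "e \<in> edges T"
    then obtain u v where "u \<in> verts T" "v \<in> verts T" "e = {u, v}" using G(2) by blast
    then show "e \<in> Pow (verts T)" by simp
  qed
  then show ?thesis using G(1) finite_subset by blast
qed

lemma finite_X:
  assumes "phylo_tree X T" shows "finite X"
proof -
  have "is_tree T" using assms unfolding phylo_tree_def by (rule conjunct1)
  then have g: "is_graph T" unfolding is_tree_def by (rule conjunct1)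
  then have "finite (verts T)" unfolding is_graph_def by (rule conjunct1)
  moreover have "X \<subseteq> verts T" using assms unfolding phylo_tree_def by blast
  ultimately show ?thesis using finite_subset by blast
qed

lemma pendant:
  assumes "phylo_tree X T" "a \<in> X" "b \<noteq> a"
  shows "\<exists>e\<in>span_edges T {a, b}. a \<in> e"
proof -
  have PT: "is_tree T \<and> X \<subseteq> verts T \<and>
     (\<forall>v\<in>verts T. (v \<in> X \<longrightarrow> degree T v = 1) \<and> (v \<notin> X \<longrightarrow> degree T v = 3))"
    using assms(1) unfolding phylo_tree_def .
  have "a \<in> verts T" using PT assms(2) by blast
  then have "degree T a = 1" using PT assms(2) by blast
  then have "card {e \<in> edges T. a \<in> e} = 1" unfolding degree_def .
  then obtain e0 where e0: "{e \<in> edges T. a \<in> e} = {e0}"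
    by (elim card_1_singletonE)
  have "e0 \<subseteq> W" if W: "W \<subseteq> verts T" "{a,b} \<subseteq> W" "connected_on W {e \<in> edges T. e \<subseteq> W}" for W
  proof -
    let ?R = "{(x, y). {x, y} \<in> {e \<in> edges T. e \<subseteq> W} \<and> x \<in> W \<and> y \<in> W}"
    have "\<forall>u\<in>W. \<forall>v\<in>W. (u, v) \<in> ?R\<^sup>*" using W(3) unfolding connected_on_def .
    moreover have "a \<in> W" "b \<in> W" using W(2) by auto
    ultimately have ab: "(a, b) \<in> ?R\<^sup>*" by blast
    have "\<exists>w. (a, w) \<in> ?R"
      using ab
    proof (cases rule: converse_rtranclE)
      case base then show ?thesis using assms(3) by simp
    next
      case (step w) then show ?thesis by blast
    qed
    then obtain w where "(a, w) \<in> ?R" by blast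
    then have "{a, w} \<in> edges T" "{a, w} \<subseteq> W" by auto
    then have "{a,w} \<in> {e \<in> edges T. a \<in> e}" by simp
    then have "{a,w} = e0" using e0 by simp
    then show ?thesis using \<open>{a, w} \<subseteq> W\<close> by blast
  qed
  then have "e0 \<subseteq> span_verts T {a, b}" unfolding span_verts_def by blast
  moreover have "e0 \<in> edges T" "a \<in> e0" using e0 by blast+
  ultimately show ?thesis unfolding span_edges_def by blast
qed

lemma c3: "card {a,c,d::'a} \<le> 3"
proof -
  have "card {d} = 1" by simp
  then have "card {c,d} \<le> 2" using card_insert_le_m1[of _ "{d}" c] by simp
  then show ?thesis using card_insert_le_m1[of _ "{c,d}" a] by simp
qed

lemma ab4: "card {a,b,c,d::'a} = 4 \<Longrightarrow> a \<noteq> b"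
proof
  assume "card {a,b,c,d} = 4" "a = b"
  then have "card {a,c,d} = 4" by simp
  then show False using c3[of a c d] by simp
qed

lemma cd4: "card {a,b,c,d::'a} = 4 \<Longrightarrow> c \<noteq> d"
proof
  assume "card {a,b,c,d} = 4" "c = d"
  then have "card {a,b,c} = 4" by simp
  then show False using c3[of a b c] by simp
qed

theorem lemma7:
  fixes X :: "'v set" and t :: nat and T :: "nat \<Rightarrow> 'v graph"
  assumes "t \<ge> 1"
    and "\<forall>i\<in>{1..t}. phylo_tree X (T i)"
  defines "QQ \<equiv> {Q \<in> quartets X. \<exists>i\<in>{2..t}. incompatible (T 1) (T i) Q}"
  shows "\<exists>x :: 'v set \<Rightarrow> real.
           (\<forall>e\<in>edges (T 1). x e \<ge> 0)
         \<and> (\<forall>a b c d. {a, b, c, d} \<in> QQ \<and> displays (T 1) a b c d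
               \<longrightarrow> (\<Sum>e\<in>Lq (T 1) a b c d. x e) \<ge> 1)
         \<and> (\<Sum>e\<in>edges (T 1). x e) = real (card X) / 4"
proof -
  have P: "phylo_tree X (T 1)" using assms(1,2) by auto
  have fE: "finite (edges (T 1))" using finite_edges[OF P] .
  have fX: "finite X" using finite_X[OF P] .
  define x :: "'v set \<Rightarrow> real" where "x e = real (card (e \<inter> X)) / 4" for e
  have tot: "(\<Sum>e\<in>edges (T 1). x e) = real (card X) / 4"
  proof -
    have "(\<Sum>e\<in>edges (T 1). card (e \<inter> X)) = (\<Sum>v\<in>X. card {e\<in>edges (T 1). v \<in> e})"
      using dc[OF fE fX] .
    also have "\<dots> = (\<Sum>v\<in>X. 1)"
    proof (rule sum.cong)
      fix v assume "v \<in> X"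
      then show "card {e\<in>edges (T 1). v \<in> e} = 1" using P
        unfolding phylo_tree_def degree_def by blast
    qed simp
    finally have "(\<Sum>e\<in>edges (T 1). card (e \<inter> X)) = card X" by simp
    then have "(\<Sum>e\<in>edges (T 1). real (card (e \<inter> X))) = real (card X)"
      by (metis of_nat_sum)
    then show ?thesis unfolding x_def by (simp add: sum_divide_distrib[symmetric])
  qed
  have con: "(\<Sum>e\<in>Lq (T 1) a b c d. x e) \<ge> 1"
    if H: "{a, b, c, d} \<in> QQ" for a b c d
  proof -
    let ?Q = "{a,b,c,d}"
    let ?L = "Lq (T 1) a b c d"
    have HQ: "?Q \<in> quartets X" using H unfolding QQ_def by blast
    then have QX: "?Q \<subseteq> X" and cQ: "card ?Q = 4" unfolding quartets_def by blast+
    have dist: "a \<noteq> b" "c \<noteq> d" using ab4[OF cQ] cd4[OF cQ] .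
    have LE: "?L \<subseteq> edges (T 1)" unfolding Lq_def span_edges_def by blast
    have fL: "finite ?L" using finite_subset[OF LE fE] .
    have fQ: "finite ?Q" by simp
    have cov: "\<exists>e\<in>?L. v \<in> e" if "v \<in> ?Q" for v
    proof -
      have QL: "span_edges (T 1) {a, b} \<subseteq> ?L" "span_edges (T 1) {c, d} \<subseteq> ?L"
        unfolding Lq_def by blast+
      have e1: "{b,a} = {a,b}" "{d,c} = {c,d}" by (rule insert_commute)+
      have aX: "a \<in> X" "b \<in> X" "c \<in> X" "d \<in> X" using QX by blast+
      have ab: "\<exists>e\<in>span_edges (T 1) {a, b}. a \<in> e"
        using pendant[OF P aX(1) dist(1)[symmetric]] .
      have ba: "\<exists>e\<in>span_edges (T 1) {a, b}. b \<in> e"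
        using pendant[OF P aX(2) dist(1)] unfolding e1 .
      have cd: "\<exists>e\<in>span_edges (T 1) {c, d}. c \<in> e"
        using pendant[OF P aX(3) dist(2)[symmetric]] .
      have dc': "\<exists>e\<in>span_edges (T 1) {c, d}. d \<in> e"
        using pendant[OF P aX(4) dist(2)] unfolding e1 .
      have "v = a \<or> v = b \<or> v = c \<or> v = d" using that by simp
      then show ?thesis
      proof (elim disjE)
        assume "v = a" then show ?thesis using ab QL by (metis subsetD)
      next
        assume "v = b" then show ?thesis using ba QL by (metis subsetD)
      next
        assume "v = c" then show ?thesis using cd QL by (metis subsetD)
      next
        assume "v = d" then show ?thesis using dc' QL by (metis subsetD)
      qed
    qed
    have "(4::nat) = (\<Sum>v\<in>?Q. 1)" using cQ by (metis card_eq_sum)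
    also have "\<dots> \<le> (\<Sum>v\<in>?Q. card {e\<in>?L. v \<in> e})"
    proof (rule sum_mono)
      fix v assume "v \<in> ?Q"
      then obtain e where "e \<in> ?L" "v \<in> e" using cov by blast
      then have "{e\<in>?L. v \<in> e} \<noteq> {}" by blast
      moreover have "finite {e\<in>?L. v \<in> e}" using fL by simp
      ultimately show "1 \<le> card {e\<in>?L. v \<in> e}"
        by (simp add: Suc_leI card_gt_0_iff)
    qed
    also have "\<dots> = (\<Sum>e\<in>?L. card (e \<inter> ?Q))" by (rule dc[OF fL fQ, symmetric])
    also have "\<dots> \<le> (\<Sum>e\<in>?L. card (e \<inter> X))"
    proof (rule sum_mono)
      fix e show "card (e \<inter> ?Q) \<le> card (e \<inter> X)"
        by (intro card_mono) (use fX QX in auto)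
    qed
    finally have "4 \<le> (\<Sum>e\<in>?L. card (e \<inter> X))" .
    then have "real 4 \<le> real (\<Sum>e\<in>?L. card (e \<inter> X))" by (simp only: of_nat_le_iff)
    then have "(4::real) \<le> (\<Sum>e\<in>?L. real (card (e \<inter> X)))"
      by (simp only: of_nat_sum of_nat_numeral)
    then show ?thesis unfolding x_def by (simp add: sum_divide_distrib[symmetric])
  qed
  have nn: "\<forall>e\<in>edges (T 1). x e \<ge> 0" unfolding x_def by simp
  have cc: "\<forall>a b c d. {a, b, c, d} \<in> QQ \<and> displays (T 1) a b c d
               \<longrightarrow> (\<Sum>e\<in>Lq (T 1) a b c d. x e) \<ge> 1"
    using con by blast
  show ?thesis using nn cc tot by blast
qed

end
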